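(* Let $\mathcal{M}$ be a structural causal game with rational outcomes $\mathcal{R}(\mathcal{M})$, let $i$ be an agent, and let $Y=y$ be a fixed outcome of interest. For a pre-policy $\pi^{pre}$ of agent $i$, let $$f(\pi^{pre}) := P^{\mathcal{R}_{\mathcal{I}}}(Y=y)=\int_{\boldsymbol{\pi}\in\mathcal{R}(\mathcal{M}_{\mathcal{I}})} P(Y=y\mid \boldsymbol{\pi})\,P^{\mathcal{R}_{\mathcal{I}}}(\boldsymbol{\pi})\,d\boldsymbol{\pi}$$ denote the probability of observing $Y=y$ under the pre-policy intervention $\pi^{pre}$. Assume $f$ is upper semicontinuous and defined on a compact domain $\operatorname{dom}(\pi^{pre})\subseteq\mathbb{R}^N$. Then (i) there exists at least one pre-policy of agent $i$ that does not decrease the probability of $Y=y$, i.e. whose causal effect $\Delta_{\mathrm{CE}}(\pi^{pre},Y=y)\ge 0$; and (ii) there exists a pre-policy $\bar\pi\in\operatorname{dom}(\pi^{pre})$ that maximizes the causal effect, i.e. $\Delta_{\mathrm{CE}}(\bar\pi,Y=y)\ge \Delta_{\mathrm{CE}}(\pi^{pre},Y=y)$ for all $\pi^{pre}\in\operatorname{dom}(\pi^{pre})$.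
   Context: A structural causal game (SCG) $\mathcal{M}=(\mathcal{G},\boldsymbol{\theta})$ consists of a DAG $\mathcal{G}$ over a set of agents $N$, exogenous variables and endogenous variables partitioned into chance, decision and utility variables; each agent $i$ has a decision $D^i$ and a policy (decision rule) $\pi_{D^i}=P(D^i\mid \mathbf{Pa}_{D^i})$, which is the value of a policy variable $\Pi_{D^i}$; $\boldsymbol{\theta}$ gives conditional distributions of non-decision variables. A rationality relation $r_{D^i}\subseteq \operatorname{dom}(\mathbf{Pa}_{\Pi_{D^i}})\times\operatorname{dom}(\Pi_{D^i})$ specifies the admissible responses of $D^i$ to its parent context; the rational outcomes $\mathcal{R}(\mathcal{M})$ are the policy profiles $\boldsymbol{\pi}$ in which every agent's policy is a best response (so each is a Nash equilibrium), and $P^{\mathcal{R}}(\boldsymbol{\pi})$ is the distribution over these profiles. A pre-policy intervention on agent $i$'s policy variable $\Pi_{D^i}$ replaces its rationality relation by a fixed decision rule $\pi^{pre}$ (removing incoming edges to $\Pi_{D^i}$), which is observed by the children of $\Pi_{D^i}$; the resulting interventional rational outcomes are $\mathcal{R}(\mathcal{M}_{\mathcal{I}})$ with distribution $P^{\mathcal{R}_{\mathcal{I}}}(\boldsymbol{\pi})$. The empty intervention leaves the game unchanged. The causal effect of $\pi^{pre}$ on $Y=y$ is $$\Delta_{\mathrm{CE}}(\pi^{pre},Y=y)=\int_{\boldsymbol{\pi}\in\mathcal{R}(\mathcal{M}_{\mathcal{I}})}P(Y=y\mid\boldsymbol{\pi})P^{\mathcal{R}_{\mathcal{I}}}(\boldsymbol{\pi})\,d\boldsymbol{\pi}-\int_{\boldsymbol{\pi}\in\mathcal{R}(\mathcal{M})}P(Y=y\mid\boldsymbol{\pi})P^{\mathcal{R}}(\boldsymbol{\pi})\,d\boldsymbol{\pi}.$$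 *)

theory Defs
  imports "HOL-Probability.Probability"
begin

definition usc_on :: "'a::metric_space set \<Rightarrow> ('a \<Rightarrow> real) \<Rightarrow> bool" where
  "usc_on S f \<longleftrightarrow>
     (\<forall>x\<in>S. \<forall>e>0. \<exists>d>0. \<forall>y\<in>S. dist y x < d \<longrightarrow> f y < f x + e)"

text \<open>Interventions on agent i's policy variable are of type 'pre option:
  None = empty intervention (game unchanged), Some pi = pre-policy pi.
  Rset I   : the set of (interventional) rational outcomes R(M_I) (policy profiles),
  PR I     : the distribution P^{R_I} over policy profiles,
  PY prof  : P(Y = y | prof).\<close>

definition prob_outcome ::
  "('pre option \<Rightarrow> 'prof set) \<Rightarrow> ('pre option \<Rightarrow> 'prof measure) \<Rightarrow> ('prof \<Rightarrow> real)
    \<Rightarrow> 'pre option \<Rightarrow> real" where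
  "prob_outcome Rset PR PY I = (LINT prof:Rset I|PR I. PY prof)"

definition causal_effect ::
  "('pre option \<Rightarrow> 'prof set) \<Rightarrow> ('pre option \<Rightarrow> 'prof measure) \<Rightarrow> ('prof \<Rightarrow> real)
    \<Rightarrow> 'pre option \<Rightarrow> real" where
  "causal_effect Rset PR PY I = prob_outcome Rset PR PY I - prob_outcome Rset PR PY None"

end

theory Submission
  imports Defs
begin

lemma usc_max:
  fixes f :: "'a::metric_space \<Rightarrow> real"
  assumes D: "compact D" "D \<noteq> {}" and u: "usc_on D f"
  shows "\<exists>x\<in>D. \<forall>y\<in>D. f y \<le> f x"
proof (rule ccontr)
  assume "\<not> ?thesis"
  then have "\<forall>x\<in>D. \<exists>p\<in>D. f p > f x" by (auto simp: not_le)
  then obtain p where p: "\<forall>x\<in>D. p x \<in> D \<and> f (p x) > f x" by metis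
  have "\<forall>x\<in>D. \<exists>d>0. \<forall>y\<in>D. dist y x < d \<longrightarrow> f y < f (p x)"
  proof
    fix x assume x: "x \<in> D"
    then have "f (p x) - f x > 0" using p by auto
    with u x obtain d where "d > 0" "\<forall>y\<in>D. dist y x < d \<longrightarrow> f y < f x + (f (p x) - f x)"
      unfolding usc_on_def by blast
    then show "\<exists>d>0. \<forall>y\<in>D. dist y x < d \<longrightarrow> f y < f (p x)" by auto
  qed
  then obtain d where d: "\<forall>x\<in>D. d x > 0 \<and> (\<forall>y\<in>D. dist y x < d x \<longrightarrow> f y < f (p x))"
    by metis
  have cov: "D \<subseteq> (\<Union>x\<in>D. ball x (d x))" using d by force
  obtain C where C: "C \<subseteq> D" "finite C" "D \<subseteq> (\<Union>x\<in>C. ball x (d x))"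
    using compactE_image[OF D(1) _ cov] by blast
  have Cne: "C \<noteq> {}" using C(3) D(2) by auto
  define m where "m = Max ((\<lambda>c. f (p c)) ` C)"
  have "m \<in> (\<lambda>c. f (p c)) ` C" unfolding m_def using C(2) Cne by (intro Max_in) auto
  then obtain c where c: "c \<in> C" "f (p c) = m" by auto
  have mx: "\<forall>c'\<in>C. f (p c') \<le> m" unfolding m_def using C(2) by auto
  have "p c \<in> D" using p c C(1) by auto
  then obtain c' where c': "c' \<in> C" "dist (p c) c' < d c'" using C(3)
    by (auto simp: dist_commute)
  then have "f (p c) < f (p c')" using d C(1) \<open>p c \<in> D\<close> by blast
  with mx c c' show False by force
qed

theorem mainTheorem1:
  fixes Rset :: "(real ^ 'n) option \<Rightarrow> 'prof set"
    and PR :: "(real ^ 'n) option \<Rightarrow> 'prof measure"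
    and PY :: "'prof \<Rightarrow> real"
    and D :: "(real ^ 'n) set"
  assumes prob: "\<And>I. prob_space (PR I)"
    and Rset_meas: "\<And>I. Rset I \<in> sets (PR I)"
    and PY_meas: "\<And>I. PY \<in> borel_measurable (PR I)"
    and PY_range: "\<And>prof. 0 \<le> PY prof \<and> PY prof \<le> 1"
    and D_ne: "D \<noteq> {}"
    and D_compact: "compact D"
    and f_usc: "usc_on D (\<lambda>p. prob_outcome Rset PR PY (Some p))"
  shows "(\<exists>I\<in>insert None (Some ` D). causal_effect Rset PR PY I \<ge> 0)
       \<and> (\<exists>pb\<in>D. \<forall>p\<in>D. causal_effect Rset PR PY (Some pb) \<ge> causal_effect Rset PR PY (Some p))"
proof
  show "\<exists>I\<in>insert None (Some ` D). causal_effect Rset PR PY I \<ge> 0"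
    by (rule bexI[of _ None]) (auto simp: causal_effect_def)
  obtain pb where "pb \<in> D" "\<forall>p\<in>D. prob_outcome Rset PR PY (Some p) \<le> prob_outcome Rset PR PY (Some pb)"
    using usc_max[OF D_compact D_ne f_usc] by blast
  then show "\<exists>pb\<in>D. \<forall>p\<in>D. causal_effect Rset PR PY (Some pb) \<ge> causal_effect Rset PR PY (Some p)"
    by (auto simp: causal_effect_def)
qed

end
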